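(* Let $n\ge1$ and $N\ge1$ be integers and let $Z_1,\dots,Z_{n+N}$ be independent identically distributed random variables with values in $[0,1]$. Let $\overline X=\frac1n\sum_{k=1}^n Z_k$ and $\overline X'=\frac1{n+N}\sum_{k=1}^{n+N}Z_k$. Define $\varphi(n)=2\left(\frac{1+n/N}{1+\sqrt{n/N}}\right)^2$. Then $\varphi(n)>1.37$, and for every constant $\delta\ge 0$, $$\Pr(\overline X'\le \overline X-\delta)\le 2\exp\!\big(-\varphi(n)\,\delta^2 n\big),\qquad \Pr(\overline X'\ge \overline X+\delta)\le 2\exp\!\big(-\varphi(n)\,\delta^2 n\big).$$
   Context: In the application, $\overline X$ is an arm's current sample mean after $n$ samples, $\overline X'$ its sample mean after $N$ additional samples, and $\delta$ is the gap between the best and another arm's current sample mean (treated as a constant): for the empirically best arm $\alpha$ and second-best arm $\beta$ this bounds $\Pr(\overline X_\alpha'\le\overline X_\beta)$ with $\delta=\overline X_\alpha-\overline X_\beta$, and for another arm $i$ it bounds $\Pr(\overline X_i'\ge \overline X_\alpha)$ with $\delta=\overline X_\alpha-\overline X_i$. *)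

theory Defs
  imports "HOL-Probability.Probability"
begin

definition phi :: "nat \<Rightarrow> nat \<Rightarrow> real" where
  "phi N n = 2 * ((1 + real n / real N) / (1 + sqrt (real n / real N)))^2"

end

theory Submission
  imports Defs
begin

lemma phi_gt:
  assumes "N \<ge> 1"
  shows "phi N n > 1.37"
proof -
  define s where "s = sqrt (real n / real N)"
  have s0: "s \<ge> 0" unfolding s_def by simp
  have ss: "s^2 = real n / real N" unfolding s_def using assms by simp
  have phi: "phi N n = 2 * ((1 + s^2) / (1 + s))^2" unfolding phi_def ss by (simp add: s_def)
  define a where "a = sqrt 2 - 1"
  have a0: "a > 0" unfolding a_def by simp
  have aa: "a^2 = 3 - 2 * sqrt 2" unfolding a_def by (simp add: power2_eq_square algebra_simps)
  have key: "(1 + s^2) - 2 * a * (1 + s) = (s - a)^2"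
    using aa by (simp add: power2_eq_square algebra_simps a_def)
  have "2 * a \<le> (1 + s^2) / (1 + s)"
    using key s0 by (simp add: field_simps)
  hence "(2*a)^2 \<le> ((1 + s^2) / (1 + s))^2" using a0 by (intro power_mono) auto
  hence "phi N n \<ge> 8 * a^2" unfolding phi by (simp add: power_mult_distrib)
  moreover have "8 * a^2 > 1.37"
  proof -
    have "sqrt 2 < 1.414375"
      by (rule real_less_lsqrt) (auto simp: power2_eq_square)
    thus ?thesis unfolding aa by simp
  qed
  ultimately show ?thesis by simp
qed

lemma phi_le:
  assumes "N \<ge> 1"
  shows "phi N n \<le> 2 * (1 + real n / real N)"
proof -
  define s where "s = sqrt (real n / real N)"
  have s0: "s \<ge> 0" unfolding s_def by simp
  have ss: "s^2 = real n / real N" unfolding s_def using assms by simp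
  have phi: "phi N n = 2 * ((1 + s^2) / (1 + s))^2" unfolding phi_def ss by (simp add: s_def)
  have "((1 + s^2) / (1 + s))^2 = (1 + s^2) * ((1 + s^2) / (1+s)^2)"
    by (simp add: power_divide power2_eq_square)
  also have "\<dots> \<le> (1 + s^2) * 1"
    using s0 mult_nonneg_nonneg[OF s0 s0] by (intro mult_left_mono) (auto simp: power2_eq_square divide_le_eq algebra_simps add_pos_nonneg)
  finally show ?thesis unfolding phi ss by simp
qed

lemma alg_aux:
  fixes x y d :: real
  assumes "x > 0" "y > 0"
  shows "-2 * (d^2*(x+y)^2/y^2) * (x*y)/(x+y) = -(2*(1+x/y))*d^2*x"
proof -
  from assms have "x + y > 0" by simp
  hence a: "(x+y)^2/(x+y) = x + y" by (simp add: power2_eq_square)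
  have "-2 * (d^2*(x+y)^2/y^2) * (x*y)/(x+y) = -2 * d^2 * ((x+y)^2/(x+y)) * x * y / y^2"
    by (simp add: field_simps)
  also have "\<dots> = -2 * d^2 * (x+y) * x / y" using a assms by (simp add: power2_eq_square)
  also have "\<dots> = -(2*(1+x/y))*d^2*x" using assms by (simp add: field_simps)
  finally show ?thesis .
qed

lemma alg_D:
  fixes x y S T :: real
  assumes h: "x > 0" "y > 0"
  shows "(S+T)/(x+y) - S/x = y/(x+y) * (-S/x + T/y)"
proof -
  define z where "z = x + y"
  have z: "z > 0" using h z_def by simp
  have 1: "y/z * (-S/x + T/y) = (T*x - S*y)/(x*z)"
    using h z by (simp add: field_simps)
  have 2: "(S+T)/z - S/x = ((S+T)*x - S*z)/(x*z)"
    using h z by (simp add: field_simps)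
  have 3: "(S+T)*x - S*z = T*x - S*y" unfolding z_def by (simp add: algebra_simps)
  show ?thesis using 1 2 3 unfolding z_def by simp
qed

theorem theorem2:
  fixes M :: "'a measure" and Z :: "nat \<Rightarrow> 'a \<Rightarrow> real"
    and n N :: nat and \<delta> :: real
  assumes "prob_space M"
    and "n \<ge> 1" and "N \<ge> 1"
    and "\<And>k. k \<in> {1..n+N} \<Longrightarrow> Z k \<in> borel_measurable M"
    and "prob_space.indep_vars M (\<lambda>_. borel) Z {1..n+N}"
    and "\<And>k. k \<in> {1..n+N} \<Longrightarrow> distr M borel (Z k) = distr M borel (Z 1)"
    and "\<And>k \<omega>. k \<in> {1..n+N} \<Longrightarrow> \<omega> \<in> space M \<Longrightarrow> Z k \<omega> \<in> {0..1}"
    and "\<delta> \<ge> 0"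
  shows "phi N n > 1.37
    \<and> measure M {\<omega> \<in> space M.
          (\<Sum>k=1..n+N. Z k \<omega>) / real (n+N) \<le> (\<Sum>k=1..n. Z k \<omega>) / real n - \<delta>}
        \<le> 2 * exp (- phi N n * \<delta>^2 * real n)
    \<and> measure M {\<omega> \<in> space M.
          (\<Sum>k=1..n+N. Z k \<omega>) / real (n+N) \<ge> (\<Sum>k=1..n. Z k \<omega>) / real n + \<delta>}
        \<le> 2 * exp (- phi N n * \<delta>^2 * real n)"
proof -
  interpret prob_space M by fact
  note meas = assms(4)
  define I where "I = {1..n+N}"
  define g where "g = (\<lambda>k (x::real). if k \<le> n then - x / real n else x / real N)"
  define Y where "Y = (\<lambda>k \<omega>. g k (Z k \<omega>))"
  define a where "a = (\<lambda>k. if k \<le> n then - 1 / real n else (0::real))"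
  define b where "b = (\<lambda>k. if k \<le> n then 0 else 1 / real N)"
  have nN: "real n \<ge> 1" "real N \<ge> 1" using assms(2,3) by auto
  have indY: "indep_vars (\<lambda>_. borel) Y I"
    unfolding Y_def I_def using assms(5)
    by (rule indep_vars_compose2) (auto simp: g_def)
  have E: "expectation (Z k) = expectation (Z 1)" if "k \<in> I" for k
  proof -
    have m1: "Z 1 \<in> borel_measurable M" using meas assms(2) by simp
    have mk: "Z k \<in> borel_measurable M" using meas that unfolding I_def by simp
    have "expectation (Z k) = integral\<^sup>L (distr M borel (Z k)) (\<lambda>x. x)"
      using integral_distr[OF mk, of "\<lambda>x. x"] by simp
    also have "\<dots> = integral\<^sup>L (distr M borel (Z 1)) (\<lambda>x. x)"
      using assms(6)[of k] that unfolding I_def by (simp only:)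
    also have "\<dots> = expectation (Z 1)"
      using integral_distr[OF m1, of "\<lambda>x. x"] by simp
    finally show ?thesis .
  qed
  have EY: "expectation (Y k) = g k (expectation (Z 1))" if "k \<in> I" for k
    using E[OF that] unfolding Y_def g_def by (auto simp: integral_divide_zero)
  have mu: "0 = (\<Sum>i\<in>I. expectation (Y i))"
  proof -
    have "I = {1..n} \<union> {n+1..n+N}" unfolding I_def by auto
    hence "(\<Sum>i\<in>I. expectation (Y i)) = (\<Sum>i=1..n. expectation (Y i)) + (\<Sum>i=n+1..n+N. expectation (Y i))"
      by (simp add: sum.union_disjoint)
    also have "\<dots> = (\<Sum>i=1..n. - expectation (Z 1) / real n) + (\<Sum>i=n+1..n+N. expectation (Z 1) / real N)"
      by (intro arg_cong2[where f="(+)"] sum.cong) (auto simp: EY I_def g_def)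
    also have "\<dots> = 0" using nN by simp
    finally show ?thesis by simp
  qed
  interpret H: Hoeffding_ineq M I Y a b "(\<Sum>i\<in>I. expectation (Y i))"
  proof unfold_locales
    show "finite I" unfolding I_def by simp
    show "indep_vars (\<lambda>_. borel) Y I" by (rule indY)
    show "AE x in M. Y i x \<in> {a i..b i}" if "i \<in> I" for i
      using assms(7)[of i] that nN unfolding I_def
      by (intro AE_I2) (auto simp: Y_def g_def a_def b_def divide_le_eq le_divide_eq)
  qed
  have sumab: "(\<Sum>i\<in>I. (b i - a i)^2) = 1 / real n + 1 / real N"
  proof -
    have "I = {1..n} \<union> {n+1..n+N}" unfolding I_def by auto
    hence "(\<Sum>i\<in>I. (b i - a i)^2) = (\<Sum>i=1..n. (b i - a i)^2) + (\<Sum>i=n+1..n+N. (b i - a i)^2)"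
      by (simp add: sum.union_disjoint)
    also have "\<dots> = (\<Sum>i=1..n. 1 / real n ^ 2) + (\<Sum>i=n+1..n+N. 1 / real N ^ 2)"
      by (intro arg_cong2[where f="(+)"] sum.cong) (auto simp: a_def b_def power_divide)
    also have "\<dots> = 1 / real n + 1 / real N" using nN by (simp add: power2_eq_square)
    finally show ?thesis .
  qed
  have pos: "(\<Sum>i\<in>I. (b i - a i)^2) > 0" unfolding sumab using nN by (intro add_pos_pos) auto
  define \<epsilon> where "\<epsilon> = \<delta> * (real n + real N) / real N"
  have eps0: "\<epsilon> \<ge> 0" unfolding \<epsilon>_def using assms(8) nN by simp
  have bound: "exp (-2 * \<epsilon>^2 / (\<Sum>i\<in>I. (b i - a i)^2)) \<le> 2 * exp (- phi N n * \<delta>^2 * real n)"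
  proof -
    have "-2 * \<epsilon>^2 / (\<Sum>i\<in>I. (b i - a i)^2) = - (2 * (1 + real n / real N)) * \<delta>^2 * real n"
      proof -
      have ne: "real n + real N \<noteq> 0" "real n \<noteq> 0" "real N \<noteq> 0" using nN by auto
      have "1 / real n + 1 / real N = (real n + real N) / (real n * real N)"
        using ne by (simp add: field_simps)
      hence "-2 * \<epsilon>^2 / (\<Sum>i\<in>I. (b i - a i)^2)
          = -2 * (\<delta>^2 * (real n + real N)^2 / real N^2) * (real n * real N) / (real n + real N)"
        unfolding sumab \<epsilon>_def by (simp add: power_mult_distrib power_divide)
      also have "\<dots> = - (2 * (1 + real n / real N)) * \<delta>^2 * real n"
        using alg_aux[of "real n" "real N" \<delta>] nN by simp
      finally show ?thesis .
    qed
    also have "\<dots> \<le> - phi N n * \<delta>^2 * real n"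
      using phi_le[OF assms(3), of n] nN
      by (intro mult_right_mono) (auto simp: zero_le_mult_iff)
    finally have "exp (-2 * \<epsilon>^2 / (\<Sum>i\<in>I. (b i - a i)^2)) \<le> exp (- phi N n * \<delta>^2 * real n)"
      by simp
    moreover have "exp (- phi N n * \<delta>^2 * real n) \<ge> 0" by simp
    ultimately show ?thesis by linarith
  qed
  have D: "(\<Sum>k=1..n+N. Z k \<omega>) / real (n+N) - (\<Sum>k=1..n. Z k \<omega>) / real n
          = real N / (real n + real N) * (\<Sum>i\<in>I. Y i \<omega>)" for \<omega>
  proof -
    have I: "I = {1..n} \<union> {n+1..n+N}" unfolding I_def by auto
    have s1: "(\<Sum>k=1..n+N. Z k \<omega>) = (\<Sum>k=1..n. Z k \<omega>) + (\<Sum>k=n+1..n+N. Z k \<omega>)"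
      using I unfolding I_def by (simp add: sum.union_disjoint)
    have s2: "(\<Sum>i\<in>I. Y i \<omega>) = (\<Sum>k=1..n. - Z k \<omega> / real n) + (\<Sum>k=n+1..n+N. Z k \<omega> / real N)"
      unfolding I by (simp add: sum.union_disjoint Y_def g_def)
    also have "\<dots> = - (\<Sum>k=1..n. Z k \<omega>) / real n + (\<Sum>k=n+1..n+N. Z k \<omega>) / real N"
      by (simp add: sum_negf sum_divide_distrib[symmetric])
    finally have s3: "(\<Sum>i\<in>I. Y i \<omega>) = - (\<Sum>k=1..n. Z k \<omega>) / real n + (\<Sum>k=n+1..n+N. Z k \<omega>) / real N" .
    show ?thesis unfolding s1 s3 of_nat_add
      using alg_D[of "real n" "real N" "\<Sum>k=1..n. Z k \<omega>" "\<Sum>k=n+1..n+N. Z k \<omega>"] nN by simp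
  qed
  have fac: "real N / (real n + real N) > 0" using nN by simp
  have set1: "{\<omega> \<in> space M. (\<Sum>k=1..n+N. Z k \<omega>) / real (n+N) \<le> (\<Sum>k=1..n. Z k \<omega>) / real n - \<delta>}
      = {\<omega> \<in> space M. (\<Sum>i\<in>I. Y i \<omega>) \<le> (\<Sum>i\<in>I. expectation (Y i)) - \<epsilon>}"
  proof -
    have "(\<Sum>k=1..n+N. Z k \<omega>) / real (n+N) \<le> (\<Sum>k=1..n. Z k \<omega>) / real n - \<delta>
        \<longleftrightarrow> (\<Sum>i\<in>I. Y i \<omega>) \<le> (\<Sum>i\<in>I. expectation (Y i)) - \<epsilon>" for \<omega>
    proof -
      have "(\<Sum>k=1..n+N. Z k \<omega>) / real (n+N) \<le> (\<Sum>k=1..n. Z k \<omega>) / real n - \<delta>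
          \<longleftrightarrow> real N / (real n + real N) * (\<Sum>i\<in>I. Y i \<omega>) \<le> - \<delta>"
        using D[of \<omega>] by linarith
      also have "\<dots> \<longleftrightarrow> (\<Sum>i\<in>I. Y i \<omega>) \<le> (\<Sum>i\<in>I. expectation (Y i)) - \<epsilon>"
        unfolding \<epsilon>_def mu[symmetric] using nN by (simp add: field_simps)
      finally show ?thesis .
    qed
    thus ?thesis by blast
  qed
  have set2: "{\<omega> \<in> space M. (\<Sum>k=1..n+N. Z k \<omega>) / real (n+N) \<ge> (\<Sum>k=1..n. Z k \<omega>) / real n + \<delta>}
      = {\<omega> \<in> space M. (\<Sum>i\<in>I. Y i \<omega>) \<ge> (\<Sum>i\<in>I. expectation (Y i)) + \<epsilon>}"
  proof -
    have "(\<Sum>k=1..n+N. Z k \<omega>) / real (n+N) \<ge> (\<Sum>k=1..n. Z k \<omega>) / real n + \<delta>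
        \<longleftrightarrow> (\<Sum>i\<in>I. Y i \<omega>) \<ge> (\<Sum>i\<in>I. expectation (Y i)) + \<epsilon>" for \<omega>
    proof -
      have "(\<Sum>k=1..n+N. Z k \<omega>) / real (n+N) \<ge> (\<Sum>k=1..n. Z k \<omega>) / real n + \<delta>
          \<longleftrightarrow> real N / (real n + real N) * (\<Sum>i\<in>I. Y i \<omega>) \<ge> \<delta>"
        using D[of \<omega>] by linarith
      also have "\<dots> \<longleftrightarrow> (\<Sum>i\<in>I. Y i \<omega>) \<ge> (\<Sum>i\<in>I. expectation (Y i)) + \<epsilon>"
        unfolding \<epsilon>_def mu[symmetric] using nN by (simp add: field_simps)
      finally show ?thesis .
    qed
    thus ?thesis by blast
  qed
  show ?thesis
  proof (intro conjI)
    show "phi N n > 1.37" by (rule phi_gt[OF assms(3)])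
    show "measure M {\<omega> \<in> space M. (\<Sum>k=1..n+N. Z k \<omega>) / real (n+N) \<le> (\<Sum>k=1..n. Z k \<omega>) / real n - \<delta>}
        \<le> 2 * exp (- phi N n * \<delta>^2 * real n)"
      unfolding set1 using H.Hoeffding_ineq_le[OF eps0 pos] bound by linarith
    show "measure M {\<omega> \<in> space M. (\<Sum>k=1..n+N. Z k \<omega>) / real (n+N) \<ge> (\<Sum>k=1..n. Z k \<omega>) / real n + \<delta>}
        \<le> 2 * exp (- phi N n * \<delta>^2 * real n)"
      unfolding set2 using H.Hoeffding_ineq_ge[OF eps0 pos] bound by linarith
  qed
qed

end
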